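(* Let $\mathcal G=\mathfrak g_1\oplus\mathfrak g_2$ and let $f\in C^p_{\mathsf{LTS}}(\mathcal G,\mathcal G)$, $g\in C^q_{\mathsf{LTS}}(\mathcal G,\mathcal G)$ be homogeneous with bidegrees $\|f\|=l_f|k_f$ and $\|g\|=l_g|k_g$. Then $\|[f,g]_{\mathsf{LTS}}\|=(l_f+l_g)|(k_f+k_g)$.
   Context: All vector spaces are over a field of characteristic $0$. Cochains: $C^p(\mathcal G,\mathcal G)=\mathrm{Hom}(\otimes^{2p+1}\mathcal G,\mathcal G)$, arguments $(\mathfrak X_1,\dots,\mathfrak X_p,x)$, $\mathfrak X_i=x_i\otimes y_i$; for $P\in C^p,Q\in C^q$, $(P\circ Q)(\mathfrak X_1,\dots,\mathfrak X_{p+q},x)=\sum_{k=1}^p(-1)^{(k-1)q}\sum_{\sigma\in\mathbb S(k-1,q)}(-1)^\sigma P(\mathfrak X_{\sigma(1)},\dots,\mathfrak X_{\sigma(k-1)},Q(\mathfrak X_{\sigma(k)},\dots,\mathfrak X_{\sigma(k+q-1)},x_{k+q})\otimes y_{k+q},\mathfrak X_{k+q+1},\dots,x)+\sum_{k=1}^p(-1)^{(k-1)q}\sum_{\sigma\in\mathbb S(k-1,q)}(-1)^\sigma P(\mathfrak X_{\sigma(1)},\dots,\mathfrak X_{\sigma(k-1)},x_{k+q}\otimes Q(\mathfrak X_{\sigma(k)},\dots,\mathfrak X_{\sigma(k+q-1)},y_{k+q}),\mathfrak X_{k+q+1},\dots,x)+\sum_{\sigma\in\mathbb S(p,q)}(-1)^\sigma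 P(\mathfrak X_{\sigma(1)},\dots,\mathfrak X_{\sigma(p)},Q(\mathfrak X_{\sigma(p+1)},\dots,\mathfrak X_{\sigma(p+q)},x))$ ($\mathbb S$ = shuffles), $[P,Q]=P\circ Q-(-1)^{pq}Q\circ P$; $C^p_{\mathsf{LTS}}$ is the subspace of $P$ with $P(\dots,x,x,y)=0$ and vanishing cyclic sum in the last three slots, with restricted bracket $[\cdot,\cdot]_{\mathsf{LTS}}$. Bidegree: $\mathfrak g^{a,b}\subset\otimes^{a+b}\mathcal G$ is the sum of all tensor products with exactly $a$ factors $\mathfrak g_1$ and $b$ factors $\mathfrak g_2$; $f\in C^p_{\mathsf{LTS}}$ has bidegree $l|k$ ($l+k=2p$) if $f(\mathfrak g^{l+1,k})\subset\mathfrak g_1$, $f(\mathfrak g^{l,k+1})\subset\mathfrak g_2$, and $f$ vanishes on all other $\mathfrak g^{a,b}$; homogeneous means having a bidegree. *)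

theory Defs
  imports Complex_Main "HOL-Combinatorics.Permutations"
begin

text \<open>Cochains in C^p(G,G) = Hom(tensor^(2p+1) G, G) are represented as functions
  'v list => 'v, meaningful on lists of length 2p+1, multilinear in every slot.
  The argument (X_1,...,X_p,x) with X_i = x_i (x) y_i is the list [x_1,y_1,...,x_p,y_p,x].\<close>

definition is_cochain :: "('k::field \<Rightarrow> 'v::ab_group_add \<Rightarrow> 'v) \<Rightarrow> nat \<Rightarrow> ('v list \<Rightarrow> 'v) \<Rightarrow> bool" where
  "is_cochain scale p f \<longleftrightarrow>
     (\<forall>xs i. length xs = 2*p+1 \<and> i < length xs \<longrightarrow>
        Vector_Spaces.linear scale scale (\<lambda>v. f (xs[i := v])))"

definition is_LTS_cochain :: "('k::field \<Rightarrow> 'v::ab_group_add \<Rightarrow> 'v) \<Rightarrow> nat \<Rightarrow> ('v list \<Rightarrow> 'v) \<Rightarrow> bool" where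
  "is_LTS_cochain scale p f \<longleftrightarrow> is_cochain scale p f \<and>
     (1 \<le> p \<longrightarrow> (\<forall>pre a b c. length pre = 2*p - 2 \<longrightarrow>
        f (pre @ [a, a, b]) = 0 \<and>
        f (pre @ [a, b, c]) + f (pre @ [b, c, a]) + f (pre @ [c, a, b]) = 0))"

definition shuffles :: "nat \<Rightarrow> nat \<Rightarrow> (nat \<Rightarrow> nat) set" where
  "shuffles r s = {\<sigma>. \<sigma> permutes {..<r+s} \<and>
      (\<forall>i j. i < j \<and> j < r \<longrightarrow> \<sigma> i < \<sigma> j) \<and>
      (\<forall>i j. r \<le> i \<and> i < j \<and> j < r+s \<longrightarrow> \<sigma> i < \<sigma> j)}"

definition negpow :: "nat \<Rightarrow> 'v::ab_group_add \<Rightarrow> 'v" where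
  "negpow n v = (if even n then v else - v)"

definition psign :: "(nat \<Rightarrow> nat) \<Rightarrow> 'v::ab_group_add \<Rightarrow> 'v" where
  "psign \<sigma> v = (if evenperm \<sigma> then v else - v)"

text \<open>The composition P o Q for P in C^p, Q in C^q, evaluated on a list of length 2(p+q)+1.
  The index m below is k-1 of the paper.\<close>
definition cochain_comp :: "nat \<Rightarrow> nat \<Rightarrow> ('v::ab_group_add list \<Rightarrow> 'v) \<Rightarrow> ('v list \<Rightarrow> 'v) \<Rightarrow> 'v list \<Rightarrow> 'v" where
  "cochain_comp p q P Q xs =
    (let n = p + q;
         X = (\<lambda>j. [xs ! (2*j), xs ! (2*j+1)]);
         x = xs ! (2*n)
     in (\<Sum>m<p. negpow (m*q) (\<Sum>\<sigma>\<in>shuffles m q. psign \<sigma>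
            (P (concat (map (X \<circ> \<sigma>) [0..<m])
                @ [Q (concat (map (X \<circ> \<sigma>) [m..<m+q]) @ [xs ! (2*(m+q))]), xs ! (2*(m+q)+1)]
                @ concat (map X [m+q+1..<n]) @ [x]))))
      + (\<Sum>m<p. negpow (m*q) (\<Sum>\<sigma>\<in>shuffles m q. psign \<sigma>
            (P (concat (map (X \<circ> \<sigma>) [0..<m])
                @ [xs ! (2*(m+q)), Q (concat (map (X \<circ> \<sigma>) [m..<m+q]) @ [xs ! (2*(m+q)+1)])]
                @ concat (map X [m+q+1..<n]) @ [x]))))
      + (\<Sum>\<sigma>\<in>shuffles p q. psign \<sigma>
            (P (concat (map (X \<circ> \<sigma>) [0..<p]) @ [Q (concat (map (X \<circ> \<sigma>) [p..<n]) @ [x])]))))"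

text \<open>[P,Q] = P o Q - (-1)^(pq) Q o P (for LTS cochains this is [.,.]_LTS).\<close>
definition cochain_bracket :: "nat \<Rightarrow> nat \<Rightarrow> ('v::ab_group_add list \<Rightarrow> 'v) \<Rightarrow> ('v list \<Rightarrow> 'v) \<Rightarrow> 'v list \<Rightarrow> 'v" where
  "cochain_bracket p q P Q = (\<lambda>xs. cochain_comp p q P Q xs - negpow (p*q) (cochain_comp q p Q P xs))"

text \<open>By multilinearity it suffices (and is equivalent) to test on pure tensors of homogeneous elements;
  t i says that slot i is taken from g1 (otherwise from g2).\<close>
definition has_bidegree :: "'v::ab_group_add set \<Rightarrow> 'v set \<Rightarrow> nat \<Rightarrow> ('v list \<Rightarrow> 'v) \<Rightarrow> int \<Rightarrow> int \<Rightarrow> bool" where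
  "has_bidegree g1 g2 p f l k \<longleftrightarrow> l + k = 2 * int p \<and>
     (\<forall>xs t. length xs = 2*p+1 \<and> (\<forall>i<length xs. xs ! i \<in> (if t i then g1 else g2)) \<longrightarrow>
        (let a = int (card {i. i < 2*p+1 \<and> t i}) in
           (a = l + 1 \<longrightarrow> f xs \<in> g1) \<and>
           (a = l \<longrightarrow> f xs \<in> g2) \<and>
           (a \<noteq> l + 1 \<and> a \<noteq> l \<longrightarrow> f xs = 0)))"

end

theory Submission imports Defs begin

definition good :: "'v::ab_group_add set \<Rightarrow> 'v set \<Rightarrow> int \<Rightarrow> int \<Rightarrow> 'v \<Rightarrow> bool" where
  "good g1 g2 L a v \<longleftrightarrow> (a = L+1 \<longrightarrow> v\<in>g1) \<and> (a = L \<longrightarrow> v \<in> g2) \<and> (a \<noteq> L+1 \<and> a \<noteq> L \<longrightarrow> v = 0)"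

definition clos :: "'v::ab_group_add set \<Rightarrow> bool" where
  "clos S \<longleftrightarrow> 0 \<in> S \<and> (\<forall>x\<in>S. \<forall>y\<in>S. x + y \<in> S) \<and> (\<forall>x\<in>S. - x \<in> S)"

lemma good_0: "clos g1 \<Longrightarrow> clos g2 \<Longrightarrow> good g1 g2 L a 0"
  by (auto simp: good_def clos_def)

lemma good_add: "clos g1 \<Longrightarrow> clos g2 \<Longrightarrow> good g1 g2 L a v \<Longrightarrow> good g1 g2 L a w \<Longrightarrow> good g1 g2 L a (v + w)"
  by (auto simp: good_def clos_def)

lemma good_neg: "clos g1 \<Longrightarrow> clos g2 \<Longrightarrow> good g1 g2 L a v \<Longrightarrow> good g1 g2 L a (- v)"
  by (auto simp: good_def clos_def)

lemma good_diff: "clos g1 \<Longrightarrow> clos g2 \<Longrightarrow> good g1 g2 L a v \<Longrightarrow> good g1 g2 L a w \<Longrightarrow> good g1 g2 L a (v - w)"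
  by (metis diff_conv_add_uminus good_add good_neg)

lemma good_negpow: "clos g1 \<Longrightarrow> clos g2 \<Longrightarrow> good g1 g2 L a v \<Longrightarrow> good g1 g2 L a (negpow n v)"
  by (simp add: negpow_def good_neg)

lemma good_psign: "clos g1 \<Longrightarrow> clos g2 \<Longrightarrow> good g1 g2 L a v \<Longrightarrow> good g1 g2 L a (psign s v)"
  by (simp add: psign_def good_neg)

lemma good_sum: "clos g1 \<Longrightarrow> clos g2 \<Longrightarrow> (\<And>x. x \<in> S \<Longrightarrow> good g1 g2 L a (h x)) \<Longrightarrow> good g1 g2 L a (sum h S)"
  by (induct S rule: infinite_finite_induct) (auto intro: good_0 good_add)

definition IX :: "(nat \<Rightarrow> nat) \<Rightarrow> nat list \<Rightarrow> nat list" where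
  "IX s L = concat (map (\<lambda>j. [2 * s j, 2 * s j + 1]) L)"

lemma IX_nth: "concat (map ((\<lambda>j. [xs ! (2*j), xs ! (2*j+1)]) \<circ> s) L) = map (nth xs) (IX s L)"
  by (induct L) (auto simp: IX_def)

lemma IX_nth_id: "concat (map (\<lambda>j. [xs ! (2*j), xs ! (2*j+1)]) L) = map (nth xs) (IX id L)"
  by (induct L) (auto simp: IX_def)

lemma IX_len[simp]: "length (IX s L) = 2 * length L"
  by (induct L) (auto simp: IX_def)

lemma IX_app: "IX s (L1 @ L2) = IX s L1 @ IX s L2"
  by (simp add: IX_def)

lemma IX_map: "IX s L = IX id (map s L)"
  by (simp add: IX_def comp_def)

lemma IX_id_upt: "a \<le> b \<Longrightarrow> IX id [a..<b] = [2*a..<2*b]"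
proof (induct b)
  case 0 then show ?case by (simp add: IX_def)
next
  case (Suc b)
  show ?case
  proof (cases "a \<le> b")
    case True
    then have "IX id [a..<Suc b] = [2*a..<2*b] @ [2*b, 2*b+1]" using Suc by (simp add: IX_app) (simp add: IX_def)
    also have "\<dots> = [2*a..<2*Suc b]" using True
      by simp
    finally show ?thesis .
  next
    case False
    then have "a = Suc b" using Suc by simp
    then show ?thesis by (simp add: IX_def)
  qed
qed

lemma mset_concat_map: "mset (concat (map F L)) = (\<Sum>x\<in>#mset L. mset (F x))"
  by (induct L) auto

lemma IX_perm: "s permutes {..<K} \<Longrightarrow> mset (IX s [0..<K]) = mset [0..<2*K]"
proof -
  assume s: "s permutes {..<K}"
  have "mset (map s [0..<K]) = mset [0..<K]"
  proof (subst set_eq_iff_mset_eq_distinct[symmetric])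
    show "distinct (map s [0..<K])" using s
      by (simp add: distinct_map permutes_inj_on)
    show "distinct [0..<K]" by simp
    show "set (map s [0..<K]) = set [0..<K]" using s
      by (simp add: permutes_image lessThan_atLeast0)
  qed
  have e: "\<And>L. mset (IX id L) = (\<Sum>x\<in>#mset L. {#2*x, 2*x+1#})"
    unfolding IX_def by (simp add: mset_concat_map)
  have "mset (IX s [0..<K]) = mset (IX id (map s [0..<K]))" by (simp only: IX_map[of s])
  also have "\<dots> = mset (IX id [0..<K])" unfolding e using \<open>mset (map s [0..<K]) = mset [0..<K]\<close> by metis
  also have "\<dots> = mset [0..<2*K]" by (simp add: IX_id_upt)
  finally show ?thesis .
qed

lemma bd:
  assumes "has_bidegree g1 g2 p f l k" "list_all2 (\<lambda>z b. z \<in> (if b then g1 else g2)) zs bs"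
    "length zs = 2*p+1"
  shows "good g1 g2 l (int (length (filter id bs))) (f zs)"
proof -
  have lb: "length bs = 2*p+1" using assms(2,3) list_all2_lengthD by metis
  have h: "\<forall>i<length zs. zs ! i \<in> (if bs ! i then g1 else g2)"
    using assms(2) by (simp add: list_all2_conv_all_nth)
  have c: "card {i. i < 2*p+1 \<and> bs ! i} = length (filter id bs)"
    using length_filter_conv_card[of id bs] lb by simp
  show ?thesis using assms(1) h assms(3) unfolding has_bidegree_def good_def Let_def c[symmetric]
    by blast
qed

lemma cochain_zero:
  assumes "is_cochain scale p f" "length zs = 2*p+1" "i < length zs" "zs ! i = 0"
  shows "f zs = 0"
proof -
  have "Vector_Spaces.linear scale scale (\<lambda>v. f (zs[i := v]))"
    using assms unfolding is_cochain_def by blast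
  then have "f (zs[i := 0]) = 0"
    using module_hom.zero linear_iff_module_hom by fastforce
  then show ?thesis using assms(4) by (metis list_update_id)
qed

lemma core:
  assumes cl: "clos g1" "clos g2"
    and bf: "has_bidegree g1 g2 p f lf kf" and bg: "has_bidegree g1 g2 q g lg kg"
    and cf: "is_cochain scale p f"
    and hx: "\<forall>i<N. xs ! i \<in> (if t i then g1 else g2)"
    and ms: "mset (A @ B @ C) = mset [0..<N]"
    and lB: "length B = 2*q+1" and lAC: "length A + length C = 2*p"
    and zs: "zs = map (nth xs) A @ [g (map (nth xs) B)] @ map (nth xs) C"
  shows "good g1 g2 (lf+lg) (int (length (filter t [0..<N]))) (f zs)"
proof -
  have "set (A @ B @ C) = set [0..<N]" by (metis ms set_mset_mset)
  then have sA: "\<forall>i\<in>set A. i < N" and sB: "\<forall>i\<in>set B. i < N" and sC: "\<forall>i\<in>set C. i < N"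
    by auto
  have "mset (filter t (A @ B @ C)) = mset (filter t [0..<N])" using ms by (simp only: mset_filter)
  then have "length (filter t (A @ B @ C)) = length (filter t [0..<N])"
    by (metis size_mset)
  then have cnt: "length (filter t [0..<N]) = length (filter t A) + length (filter t B) + length (filter t C)"
    by simp
  have la: "\<And>L. \<forall>i\<in>set L. i < N \<Longrightarrow> list_all2 (\<lambda>z b. z \<in> (if b then g1 else g2)) (map (nth xs) L) (map t L)"
    using hx by (simp add: list_all2_map1 list_all2_map2 list_all2_same)
  define v where "v = g (map (nth xs) B)"
  have gB: "good g1 g2 lg (int (length (filter t B))) v"
    using bd[OF bg la[OF sB]] lB unfolding v_def by (simp add: filter_map comp_def)
  define a' where "a' = int (length (filter t B))"
  show ?thesis
  proof (cases "a' = lg + 1 \<or> a' = lg")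
    case False
    then have "v = 0" using gB unfolding good_def a'_def by auto
    then have "f zs = 0"
      using cochain_zero[OF cf, of zs "length A"] zs lAC unfolding v_def by (simp add: nth_append)
    then show ?thesis using good_0[OF cl] by simp
  next
    case True
    define b where "b = (a' = lg + 1)"
    have vb: "v \<in> (if b then g1 else g2)" using True gB unfolding good_def b_def a'_def by auto
    have "list_all2 (\<lambda>z b. z \<in> (if b then g1 else g2)) zs (map t A @ [b] @ map t C)"
      unfolding zs v_def[symmetric]
      by (intro list_all2_appendI la sA sC) (use vb in auto)
    from bd[OF bf this] have "good g1 g2 lf (int (length (filter id (map t A @ [b] @ map t C)))) (f zs)"
      using zs lAC by simp
    moreover have "int (length (filter id (map t A @ [b] @ map t C))) = int (length (filter t [0..<N])) - lg"
      using cnt True unfolding b_def a'_def by (auto simp: filter_map comp_def)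
    ultimately show ?thesis unfolding good_def by auto
  qed
qed

lemma upt_split: "K < n \<Longrightarrow> [2*K..<2*n+1] = [2*K, 2*K+1] @ IX id [Suc K..<n] @ [2*n]"
  by (simp add: IX_id_upt upt_conv_Cons)

lemma ms_base: "s permutes {..<K} \<Longrightarrow> K \<le> n \<Longrightarrow> mset (IX s [0..<K]) + mset [2*K..<2*n+1] = mset [0..<2*n+1]"
proof -
  assume a: "s permutes {..<K}" "K \<le> n"
  have "[0..<2*n+1] = [0..<2*K] @ [2*K..<2*n+1]" using a(2)
    by (metis upt_add_eq_append zero_le le_add_diff_inverse mult_le_mono2 trans_le_add1)
  then show ?thesis by (simp only: IX_perm[OF a(1)] mset_append)
qed

lemma shuffles_perm: "s \<in> shuffles m q \<Longrightarrow> s permutes {..<m+q}"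
  by (simp add: shuffles_def)

lemma mset_swap: "mset ((a @ [x]) @ (b @ [y]) @ c @ [z]) = mset (a @ (b @ [x]) @ [y] @ c @ [z])"
  by (simp add: ac_simps)

lemma comp_good:
  assumes cl: "clos g1" "clos g2"
    and bf: "has_bidegree g1 g2 P f lf kf" and bg: "has_bidegree g1 g2 Q g lg kg"
    and cf: "is_cochain scale P f"
    and hx: "\<forall>i<2*(P+Q)+1. xs ! i \<in> (if t i then g1 else g2)"
  shows "good g1 g2 (lf+lg) (int (length (filter t [0..<2*(P+Q)+1]))) (cochain_comp P Q f g xs)"
proof -
  let ?N = "2*(P+Q)+1"
  let ?G = "good g1 g2 (lf+lg) (int (length (filter t [0..<?N])))"
  have T1: "?G (f (map (nth xs) (IX s [0..<m]) @ [g (map (nth xs) (IX s [m..<m+Q]) @ [xs ! (2*(m+Q))]), xs ! (2*(m+Q)+1)]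
            @ map (nth xs) (IX id [m+Q+1..<P+Q]) @ [xs ! (2*(P+Q))]))"
    if "m < P" "s \<in> shuffles m Q" for m s
  proof (rule core[OF cl bf bg cf hx, where A="IX s [0..<m]" and B="IX s [m..<m+Q] @ [2*(m+Q)]"
      and C="[2*(m+Q)+1] @ IX id [m+Q+1..<P+Q] @ [2*(P+Q)]"])
    have sp: "s permutes {..<m+Q}" using that shuffles_perm by blast
    have b: "mset (IX s [0..<m+Q] @ [2*(m+Q)..<2*(P+Q)+1]) = mset [0..<2*(P+Q)+1]"
      unfolding mset_append by (rule ms_base[OF sp]) (use that in simp)
    have c: "IX s [0..<m+Q] = IX s [0..<m] @ IX s [m..<m+Q]"
      unfolding IX_app[symmetric] by (rule arg_cong[where f="IX s"], rule upt_add_eq_append) simp_all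
    have e: "IX s [0..<m] @ (IX s [m..<m+Q] @ [2*(m+Q)]) @ [2*(m+Q)+1] @ IX id [m+Q+1..<P+Q] @ [2*(P+Q)]
       = IX s [0..<m+Q] @ [2*(m+Q)..<2*(P+Q)+1]"
      unfolding c upt_split[of "m+Q" "P+Q", OF add_strict_right_mono[OF that(1)]]
      by (simp only: append_assoc append.simps Suc_eq_plus1)
    show "mset (IX s [0..<m] @ (IX s [m..<m+Q] @ [2*(m+Q)]) @ [2*(m+Q)+1] @ IX id [m+Q+1..<P+Q] @ [2*(P+Q)]) = mset [0..<?N]"
      unfolding e b ..
  qed (use that in \<open>simp_all add: IX_nth IX_nth_id\<close>)
  have T2: "?G (f (map (nth xs) (IX s [0..<m]) @ [xs ! (2*(m+Q)), g (map (nth xs) (IX s [m..<m+Q]) @ [xs ! (2*(m+Q)+1)])]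
            @ map (nth xs) (IX id [m+Q+1..<P+Q]) @ [xs ! (2*(P+Q))]))"
    if "m < P" "s \<in> shuffles m Q" for m s
  proof (rule core[OF cl bf bg cf hx, where A="IX s [0..<m] @ [2*(m+Q)]" and B="IX s [m..<m+Q] @ [2*(m+Q)+1]"
      and C="IX id [m+Q+1..<P+Q] @ [2*(P+Q)]"])
    have sp: "s permutes {..<m+Q}" using that shuffles_perm by blast
    have b: "mset (IX s [0..<m+Q] @ [2*(m+Q)..<2*(P+Q)+1]) = mset [0..<2*(P+Q)+1]"
      unfolding mset_append by (rule ms_base[OF sp]) (use that in simp)
    have c: "IX s [0..<m+Q] = IX s [0..<m] @ IX s [m..<m+Q]"
      unfolding IX_app[symmetric] by (rule arg_cong[where f="IX s"], rule upt_add_eq_append) simp_all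
    have e: "IX s [0..<m] @ (IX s [m..<m+Q] @ [2*(m+Q)]) @ [2*(m+Q)+1] @ IX id [m+Q+1..<P+Q] @ [2*(P+Q)]
       = IX s [0..<m+Q] @ [2*(m+Q)..<2*(P+Q)+1]"
      unfolding c upt_split[of "m+Q" "P+Q", OF add_strict_right_mono[OF that(1)]]
      by (simp only: append_assoc append.simps Suc_eq_plus1)
    have f: "mset ((IX s [0..<m] @ [2*(m+Q)]) @ (IX s [m..<m+Q] @ [2*(m+Q)+1]) @ IX id [m+Q+1..<P+Q] @ [2*(P+Q)])
      = mset (IX s [0..<m] @ (IX s [m..<m+Q] @ [2*(m+Q)]) @ [2*(m+Q)+1] @ IX id [m+Q+1..<P+Q] @ [2*(P+Q)])"
      by (rule mset_swap)
    show "mset ((IX s [0..<m] @ [2*(m+Q)]) @ (IX s [m..<m+Q] @ [2*(m+Q)+1]) @ IX id [m+Q+1..<P+Q] @ [2*(P+Q)]) = mset [0..<?N]"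
      unfolding f e b ..
  qed (use that in \<open>simp_all add: IX_nth IX_nth_id\<close>)
  have T3: "?G (f (map (nth xs) (IX s [0..<P]) @ [g (map (nth xs) (IX s [P..<P+Q]) @ [xs ! (2*(P+Q))])]))"
    if "s \<in> shuffles P Q" for s
  proof (rule core[OF cl bf bg cf hx, where A="IX s [0..<P]" and B="IX s [P..<P+Q] @ [2*(P+Q)]"
      and C="[]"])
    have sp: "s permutes {..<P+Q}" using that shuffles_perm by blast
    have b: "mset (IX s [0..<P+Q] @ [2*(P+Q)..<2*(P+Q)+1]) = mset [0..<2*(P+Q)+1]"
      unfolding mset_append by (rule ms_base[OF sp]) simp
    have c: "IX s [0..<P+Q] = IX s [0..<P] @ IX s [P..<P+Q]"
      unfolding IX_app[symmetric] by (rule arg_cong[where f="IX s"], rule upt_add_eq_append) simp_all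
    have e: "IX s [0..<P] @ (IX s [P..<P+Q] @ [2*(P+Q)]) @ [] = IX s [0..<P+Q] @ [2*(P+Q)..<2*(P+Q)+1]"
      unfolding c by (simp only: append_assoc append.simps append_Nil2 upt_rec_numeral upt_Suc_append) simp
    show "mset (IX s [0..<P] @ (IX s [P..<P+Q] @ [2*(P+Q)]) @ []) = mset [0..<?N]"
      unfolding e b ..
  qed (simp_all add: IX_nth IX_nth_id)
  show ?thesis
    unfolding cochain_comp_def Let_def IX_nth IX_nth_id
    apply (intro good_add[OF cl] good_sum[OF cl] good_negpow[OF cl] good_psign[OF cl])
    apply (rule T1; simp)
     apply (rule T2; simp)
    apply (rule T3; simp)
    done
qed

theorem lemma3p5:
  fixes scale :: "'k::field_char_0 \<Rightarrow> 'v::ab_group_add \<Rightarrow> 'v"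
    and g1 g2 :: "'v set"
    and f g :: "'v list \<Rightarrow> 'v"
    and p q :: nat and lf kf lg kg :: int
  assumes "vector_space scale"
    and "module.subspace scale g1" and "module.subspace scale g2"
    and "g1 \<inter> g2 = {0}" and "\<forall>v. \<exists>a\<in>g1. \<exists>b\<in>g2. v = a + b"
    and "is_LTS_cochain scale p f" and "is_LTS_cochain scale q g"
    and "has_bidegree g1 g2 p f lf kf" and "has_bidegree g1 g2 q g lg kg"
  shows "has_bidegree g1 g2 (p + q) (cochain_bracket p q f g) (lf + lg) (kf + kg)"
proof -
  have md: "module scale" using assms(1) module_iff_vector_space by blast
  have cl1: "clos g1" using module.subspace_0[OF md assms(2)] module.subspace_add[OF md assms(2)]
      module.subspace_neg[OF md assms(2)] unfolding clos_def by blast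
  have cl2: "clos g2" using module.subspace_0[OF md assms(3)] module.subspace_add[OF md assms(3)]
      module.subspace_neg[OF md assms(3)] unfolding clos_def by blast
  have cf: "is_cochain scale p f" and cg: "is_cochain scale q g"
    using assms(6,7) unfolding is_LTS_cochain_def by auto
  have lk: "lf + kf = 2 * int p" "lg + kg = 2 * int q"
    using assms(8,9) unfolding has_bidegree_def by auto
  have main: "good g1 g2 (lf+lg) (int (length (filter t [0..<2*(p+q)+1]))) (cochain_bracket p q f g xs)"
    if hx: "\<forall>i<2*(p+q)+1. xs ! i \<in> (if t i then g1 else g2)" for xs t
  proof -
    have A: "good g1 g2 (lf+lg) (int (length (filter t [0..<2*(p+q)+1]))) (cochain_comp p q f g xs)"
      by (rule comp_good[OF cl1 cl2 assms(8) assms(9) cf hx])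
    have hx': "\<forall>i<2*(q+p)+1. xs ! i \<in> (if t i then g1 else g2)" using hx by (simp add: add.commute)
    have B: "good g1 g2 (lg+lf) (int (length (filter t [0..<2*(q+p)+1]))) (cochain_comp q p g f xs)"
      by (rule comp_good[OF cl1 cl2 assms(9) assms(8) cg hx'])
    then have B': "good g1 g2 (lf+lg) (int (length (filter t [0..<2*(p+q)+1]))) (cochain_comp q p g f xs)"
      by (simp add: add.commute)
    show ?thesis unfolding cochain_bracket_def
      by (rule good_diff[OF cl1 cl2 A good_negpow[OF cl1 cl2 B']])
  qed
  show ?thesis
    unfolding has_bidegree_def
  proof (intro conjI allI impI)
    show "lf + lg + (kf + kg) = 2 * int (p + q)" using lk by simp
  next
    fix xs t
    assume h: "length xs = 2 * (p + q) + 1 \<and> (\<forall>i<length xs. xs ! i \<in> (if t i then g1 else g2))"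
    have c0: "length (filter t [0..<N]) = card {i. i < N \<and> t i}" for N
      unfolding length_filter_conv_card by (rule arg_cong[where f=card]) auto
    have c: "card {i. i < 2 * (p + q) + 1 \<and> t i} = length (filter t [0..<2*(p+q)+1])"
      by (rule c0[symmetric])
    have "good g1 g2 (lf+lg) (int (length (filter t [0..<2*(p+q)+1]))) (cochain_bracket p q f g xs)"
      using main h by simp
    then show "let a = int (card {i. i < 2 * (p + q) + 1 \<and> t i})
          in (a = lf + lg + 1 \<longrightarrow> cochain_bracket p q f g xs \<in> g1) \<and>
             (a = lf + lg \<longrightarrow> cochain_bracket p q f g xs \<in> g2) \<and>
             (a \<noteq> lf + lg + 1 \<and> a \<noteq> lf + lg \<longrightarrow> cochain_bracket p q f g xs = 0)"
      unfolding c Let_def good_def .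
  qed
qed

end
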